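(* Let $N\ge1$ and let $T_N$ be the $N\times N$ Pascal matrix $(T_N)_{jk}=\binom{j+k}{j}$, $0\le j,k<N$. Let $J_N$ be the $N\times N$ symmetric tridiagonal matrix with $$(J_N)_{kk}=k\,(2k^2+3k+2-N^2),\qquad (J_N)_{k,k+1}=(J_N)_{k+1,k}=(k+1)\big(N^2-(k+1)^2\big),$$ and all other entries zero; equivalently $(J_N)_{jk}=(N^2J-\widetilde J)_{jk}$ for $0\le j,k<N$, where $J,\widetilde J$ are the semi-infinite tridiagonal symmetric matrices with diagonals $-n$, resp. $-2n^3-3n^2-2n$, and off-diagonal entries $J_{n-1,n}=n$, resp. $\widetilde J_{n-1,n}=n^3$. Then $J_NT_N=T_NJ_N$.
   Context: Matrix indices start at $0$. *)

theory Defs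
  imports "Jordan_Normal_Form.Matrix"
begin

definition pascal_mat :: "nat \<Rightarrow> int mat" where
  "pascal_mat N = mat N N (\<lambda>(j, k). int ((j + k) choose j))"

definition J_mat :: "nat \<Rightarrow> int mat" where
  "J_mat N = mat N N (\<lambda>(j, k).
     let n = int N; a = int j; b = int k in
     if j = k then a * (2 * a^2 + 3 * a + 2 - n^2)
     else if k = j + 1 then b * (n^2 - b^2)
     else if j = k + 1 then a * (n^2 - a^2)
     else 0)"

end

theory Submission
  imports Defs
begin

lemma tri_sum1:
  fixes f a b c :: "nat \<Rightarrow> int"
  assumes "i < N"
  shows "(\<Sum>j<N. (if j = i then a j else if j = i+1 then b j else if i = j+1 then c j else 0) * f j)
   = a i * f i + (if i+1<N then b (i+1) * f (i+1) else 0) + (if 0<i then c (i-1) * f (i-1) else 0)"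
proof -
  have "\<And>j. (if j = i then a j else if j = i+1 then b j else if i = j+1 then c j else 0) * f j
    = (if j = i then a i * f i else 0) + (if j = i+1 then b (i+1) * f (i+1) else 0)
      + (if j = i - 1 \<and> 0 < i then c (i-1) * f (i-1) else 0)" by auto
  then have "(\<Sum>j<N. (if j = i then a j else if j = i+1 then b j else if i = j+1 then c j else 0) * f j)
    = (\<Sum>j<N. (if j = i then a i * f i else 0) + (if j = i+1 then b (i+1) * f (i+1) else 0)
      + (if j = i - 1 \<and> 0 < i then c (i-1) * f (i-1) else 0))" by simp
  also have "\<dots> = a i * f i + (if i+1<N then b (i+1) * f (i+1) else 0) + (if 0<i then c (i-1) * f (i-1) else 0)"
    using assms by (simp add: sum.distrib sum.delta' conj_commute)
  finally show ?thesis .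
qed

lemma tri_sum2:
  fixes f a b c :: "nat \<Rightarrow> int"
  assumes "k < N"
  shows "(\<Sum>j<N. f j * (if j = k then a j else if k = j+1 then b j else if j = k+1 then c j else 0))
   = f k * a k + (if 0<k then f (k-1) * b (k-1) else 0) + (if k+1<N then f (k+1) * c (k+1) else 0)"
proof -
  have "\<And>j. f j * (if j = k then a j else if k = j+1 then b j else if j = k+1 then c j else 0)
    = (if j = k then f k * a k else 0) + (if j = k - 1 \<and> 0 < k then f (k-1) * b (k-1) else 0)
      + (if j = k+1 then f (k+1) * c (k+1) else 0)" by auto
  then have "(\<Sum>j<N. f j * (if j = k then a j else if k = j+1 then b j else if j = k+1 then c j else 0))
    = (\<Sum>j<N. (if j = k then f k * a k else 0) + (if j = k - 1 \<and> 0 < k then f (k-1) * b (k-1) else 0)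
      + (if j = k+1 then f (k+1) * c (k+1) else 0))" by simp
  also have "\<dots> = f k * a k + (if 0<k then f (k-1) * b (k-1) else 0) + (if k+1<N then f (k+1) * c (k+1) else 0)"
    using assms by (simp add: sum.distrib sum.delta' conj_commute)
  finally show ?thesis .
qed

lemma key:
  fixes i k :: nat and n :: int
  shows "int i * (n^2 - int i^2) * int ((i - 1 + k) choose (i - 1))
    + int i * (2 * int i^2 + 3 * int i + 2 - n^2) * int ((i+k) choose i)
    + (int i + 1) * (n^2 - (int i + 1)^2) * int ((i + 1 + k) choose (i+1))
   = int ((i + (k - 1)) choose i) * (int k * (n^2 - int k^2))
    + int ((i+k) choose i) * (int k * (2 * int k^2 + 3 * int k + 2 - n^2))
    + int ((i + (k+1)) choose i) * ((int k + 1) * (n^2 - (int k + 1)^2))"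
proof (cases "i + k = 0")
  case True then show ?thesis by simp
next
  case False
  define c where "c = int ((i+k) choose i)"
  define x where "x = int ((i - 1 + k) choose (i - 1))"
  define y where "y = int ((i + 1 + k) choose (i+1))"
  define z where "z = int ((i + (k - 1)) choose i)"
  define w where "w = int ((i + (k+1)) choose i)"
  have hx: "int i * ((int i + int k) * x) = int i * (int i * c)"
  proof (cases i)
    case (Suc a)
    have "Suc (a+k) * ((a+k) choose a) = (Suc (a+k) choose Suc a) * Suc a"
      by (rule Suc_times_binomial_eq)
    then have "(int i + int k) * x = int i * c" unfolding x_def c_def Suc
      by (simp add: algebra_simps) (metis of_nat_add of_nat_mult)
    then show ?thesis by simp
  qed simp
  have hy: "(int i + 1) * y = (int i + int k + 1) * c"
  proof -
    have "Suc (i+k) * ((i+k) choose i) = (Suc (i+k) choose Suc i) * Suc i"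
      by (rule Suc_times_binomial_eq)
    then show ?thesis unfolding y_def c_def
      by (simp add: algebra_simps) (metis of_nat_add of_nat_mult)
  qed
  have cs: "c = int ((i+k) choose k)" unfolding c_def
    by (metis add_diff_cancel_left' binomial_symmetric le_add1)
  have zs: "z = int ((i + (k - 1)) choose (k - 1))" unfolding z_def
    by (metis add_diff_cancel_left' binomial_symmetric le_add1)
  have ws: "w = int ((i + (k + 1)) choose (k + 1))" unfolding w_def
    by (metis add_diff_cancel_left' binomial_symmetric le_add1)
  have hz: "int k * ((int i + int k) * z) = int k * (int k * c)"
  proof (cases k)
    case (Suc a)
    have "Suc (a+i) * ((a+i) choose a) = (Suc (a+i) choose Suc a) * Suc a"
      by (rule Suc_times_binomial_eq)
    then have "(int i + int k) * z = int k * c" unfolding zs cs Suc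
      by (simp add: algebra_simps) (metis of_nat_add of_nat_mult)
    then show ?thesis by simp
  qed simp
  have hw: "(int k + 1) * w = (int i + int k + 1) * c"
  proof -
    have "Suc (k+i) * ((k+i) choose k) = (Suc (k+i) choose Suc k) * Suc k"
      by (rule Suc_times_binomial_eq)
    then show ?thesis unfolding ws cs
      by (simp add: algebra_simps) (metis of_nat_add of_nat_mult)
  qed
  have "int i + int k \<noteq> 0" using False by linarith
  then have pos: "(int i + 1) * (int k + 1) * (int i + int k) \<noteq> 0" by simp
  have "(int i + 1) * (int k + 1) * (int i + int k) *
      (int i * (n^2 - int i^2) * x + int i * (2 * int i^2 + 3 * int i + 2 - n^2) * c
       + (int i + 1) * (n^2 - (int i + 1)^2) * y)
    = (int i + 1) * (int k + 1) * (int i + int k) *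
      (z * (int k * (n^2 - int k^2)) + c * (int k * (2 * int k^2 + 3 * int k + 2 - n^2))
       + w * ((int k + 1) * (n^2 - (int k + 1)^2)))"
  proof -
    let ?I = "int i" and ?K = "int k"
    have e1: "(?I + 1) * (?K + 1) * (?I + ?K) *
      (?I * (n^2 - ?I^2) * x + ?I * (2 * ?I^2 + 3 * ?I + 2 - n^2) * c
       + (?I + 1) * (n^2 - (?I + 1)^2) * y)
     = (?I + 1) * (?K + 1) * (n^2 - ?I^2) * (?I * ((?I + ?K) * x))
       + (?I + 1) * (?K + 1) * (?I + ?K) * ?I * (2 * ?I^2 + 3 * ?I + 2 - n^2) * c
       + (?I + 1) * (?K + 1) * (?I + ?K) * (n^2 - (?I + 1)^2) * ((?I + 1) * y)"
      by (simp add: algebra_simps)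
    have e2: "(?I + 1) * (?K + 1) * (?I + ?K) *
      (z * (?K * (n^2 - ?K^2)) + c * (?K * (2 * ?K^2 + 3 * ?K + 2 - n^2))
       + w * ((?K + 1) * (n^2 - (?K + 1)^2)))
     = (?I + 1) * (?K + 1) * (n^2 - ?K^2) * (?K * ((?I + ?K) * z))
       + (?I + 1) * (?K + 1) * (?I + ?K) * ?K * (2 * ?K^2 + 3 * ?K + 2 - n^2) * c
       + (?I + 1) * (?K + 1) * (?I + ?K) * (n^2 - (?K + 1)^2) * ((?K + 1) * w)"
      by (simp add: algebra_simps)
    show ?thesis unfolding e1 e2 hx hy hz hw by (simp add: algebra_simps power2_eq_square)
  qed
  then show ?thesis using pos unfolding c_def x_def y_def z_def w_def by simp
qed

theorem theorem3p2:
  fixes N :: nat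
  assumes "N \<ge> 1"
  shows "J_mat N * pascal_mat N = pascal_mat N * J_mat N"
proof (rule eq_matI)
  fix i k assume i: "i < dim_row (pascal_mat N * J_mat N)" and k: "k < dim_col (pascal_mat N * J_mat N)"
  then have iN: "i < N" and kN: "k < N" by (auto simp: pascal_mat_def J_mat_def)
  define n where "n = int N"
  have L: "(J_mat N * pascal_mat N) $$ (i,k) = (\<Sum>j<N. (if j = i then int j * (2 * int j^2 + 3 * int j + 2 - n^2)
     else if j = i+1 then int j * (n^2 - int j^2) else if i = j+1 then int i * (n^2 - int i^2) else 0)
     * int ((j + k) choose j))"
    using iN kN unfolding n_def
    by (auto simp: J_mat_def pascal_mat_def scalar_prod_def Let_def lessThan_atLeast0 intro!: sum.cong)
  have R: "(pascal_mat N * J_mat N) $$ (i,k) = (\<Sum>j<N. int ((i + j) choose i) * (if j = k then int j * (2 * int j^2 + 3 * int j + 2 - n^2)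
     else if k = j+1 then int k * (n^2 - int k^2) else if j = k+1 then int j * (n^2 - int j^2) else 0))"
    using iN kN unfolding n_def
    by (auto simp: J_mat_def pascal_mat_def scalar_prod_def Let_def lessThan_atLeast0 intro!: sum.cong)
  have tri1: "(\<Sum>j<N. (if j = i then int j * (2 * int j^2 + 3 * int j + 2 - n^2)
     else if j = i+1 then int j * (n^2 - int j^2) else if i = j+1 then int i * (n^2 - int i^2) else 0)
     * int ((j + k) choose j)) = int i * (2 * int i^2 + 3 * int i + 2 - n^2) * int ((i + k) choose i)
      + (if i+1<N then int (i+1) * (n^2 - int (i+1)^2) * int ((i+1 + k) choose (i+1)) else 0)
      + (if 0<i then int i * (n^2 - int i^2) * int ((i-1 + k) choose (i-1)) else 0)"
    using tri_sum1[OF iN, of "\<lambda>j. int j * (2 * int j^2 + 3 * int j + 2 - n^2)"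
       "\<lambda>j. int j * (n^2 - int j^2)" "\<lambda>j. int i * (n^2 - int i^2)" "\<lambda>j. int ((j + k) choose j)"]
    by simp
  have L2': "int i * (2 * int i^2 + 3 * int i + 2 - n^2) * int ((i + k) choose i)
      + (if i+1<N then int (i+1) * (n^2 - int (i+1)^2) * int ((i+1 + k) choose (i+1)) else 0)
      + (if 0<i then int i * (n^2 - int i^2) * int ((i-1 + k) choose (i-1)) else 0) = int i * (n^2 - int i^2) * int ((i - 1 + k) choose (i - 1))
    + int i * (2 * int i^2 + 3 * int i + 2 - n^2) * int ((i+k) choose i)
    + (int i + 1) * (n^2 - (int i + 1)^2) * int ((i + 1 + k) choose (i+1))"
  proof (cases "i+1 < N")
    case True then show ?thesis by (cases "0 < i") (auto simp: n_def algebra_simps)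
  next
    case False then have "N = i+1" using iN by simp
    then show ?thesis by (cases "0 < i") (auto simp: n_def algebra_simps)
  qed
  have tri2: "(\<Sum>j<N. int ((i + j) choose i) * (if j = k then int j * (2 * int j^2 + 3 * int j + 2 - n^2)
     else if k = j+1 then int k * (n^2 - int k^2) else if j = k+1 then int j * (n^2 - int j^2) else 0))
     = int ((i + k) choose i) * (int k * (2 * int k^2 + 3 * int k + 2 - n^2))
      + (if 0<k then int ((i + (k-1)) choose i) * (int k * (n^2 - int k^2)) else 0)
      + (if k+1<N then int ((i + (k+1)) choose i) * (int (k+1) * (n^2 - int (k+1)^2)) else 0)"
    using tri_sum2[OF kN, of "\<lambda>j. int ((i + j) choose i)" "\<lambda>j. int j * (2 * int j^2 + 3 * int j + 2 - n^2)"
       "\<lambda>j. int k * (n^2 - int k^2)" "\<lambda>j. int j * (n^2 - int j^2)"]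
    by simp
  have R2': "int ((i + k) choose i) * (int k * (2 * int k^2 + 3 * int k + 2 - n^2))
      + (if 0<k then int ((i + (k-1)) choose i) * (int k * (n^2 - int k^2)) else 0)
      + (if k+1<N then int ((i + (k+1)) choose i) * (int (k+1) * (n^2 - int (k+1)^2)) else 0) = int ((i + (k - 1)) choose i) * (int k * (n^2 - int k^2))
    + int ((i+k) choose i) * (int k * (2 * int k^2 + 3 * int k + 2 - n^2))
    + int ((i + (k+1)) choose i) * ((int k + 1) * (n^2 - (int k + 1)^2))"
  proof (cases "k+1 < N")
    case True then show ?thesis by (cases "0 < k") (auto simp: n_def algebra_simps)
  next
    case False then have "N = k+1" using kN by simp
    then show ?thesis by (cases "0 < k") (auto simp: n_def algebra_simps)
  qed
  have L2: "(J_mat N * pascal_mat N) $$ (i,k) = int i * (n^2 - int i^2) * int ((i - 1 + k) choose (i - 1))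
    + int i * (2 * int i^2 + 3 * int i + 2 - n^2) * int ((i+k) choose i)
    + (int i + 1) * (n^2 - (int i + 1)^2) * int ((i + 1 + k) choose (i+1))"
    using L tri1 L2' by simp
  have R2: "(pascal_mat N * J_mat N) $$ (i,k) = int ((i + (k - 1)) choose i) * (int k * (n^2 - int k^2))
    + int ((i+k) choose i) * (int k * (2 * int k^2 + 3 * int k + 2 - n^2))
    + int ((i + (k+1)) choose i) * ((int k + 1) * (n^2 - (int k + 1)^2))"
    using R tri2 R2' by simp
  show "(J_mat N * pascal_mat N) $$ (i,k) = (pascal_mat N * J_mat N) $$ (i,k)"
    unfolding L2 R2 by (rule key)
qed (auto simp: pascal_mat_def J_mat_def)

end
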